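(* Let $G=(V,E)$ be a simple undirected graph on $n$ nodes, let $0<\epsilon<\frac13$, $\delta>0$, $p\in(0,1)$, and let $D\subseteq V$ be an $\epsilon^3$-near clique with $|D|\ge\delta n$; let $C=K_{\epsilon^2}(D)\cap D$. Let $S=S^{(1)}\cup S^{(2)}$ be the random set where each node independently belongs to $S^{(1)}$ with probability $p_1=p/2$ and, independently, to $S^{(2)}$ with probability $p_2=\frac{p-p_1}{1-p_1}$ (so each node is in $S$ independently with probability $p$), and let $X^*=S^{(1)}\cap C$. Then $X^*$ is contained in a single connected component of $G[S]$ with probability at least $1-e^{-\Omega(\delta pn)}$.
   Context: $\Gamma(v)$ denotes the set of neighbors of $v$; $G[S]$ is the subgraph induced by $S$. For $Y\subseteq V$ and $0\le\eta\le1$: $K_\eta(Y)=\{v\in V: |\Gamma(v)\cap Y|\ge(1-\eta)|Y|\}$. Each undirected edge is counted as two directed edges; a set $D\subseteq V$ is a $\gamma$-near clique if $|\{(u,v)\in D\times D:\{u,v\}\in E\}|\ge(1-\gamma)|D|(|D|-1)$. $\Omega(\cdot)$ hides an absolute positive constant. *)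

theory Defs
  imports "HOL-Probability.Probability"
begin

definition simple_graph :: "'a set \<Rightarrow> ('a \<Rightarrow> 'a \<Rightarrow> bool) \<Rightarrow> bool" where
  "simple_graph V E \<longleftrightarrow> finite V \<and> (\<forall>u v. E u v \<longrightarrow> E v u)
     \<and> (\<forall>v. \<not> E v v) \<and> (\<forall>u v. E u v \<longrightarrow> u \<in> V \<and> v \<in> V)"

definition nbrs :: "'a set \<Rightarrow> ('a \<Rightarrow> 'a \<Rightarrow> bool) \<Rightarrow> 'a \<Rightarrow> 'a set" where
  "nbrs V E v = {u \<in> V. E v u}"

definition K_set :: "'a set \<Rightarrow> ('a \<Rightarrow> 'a \<Rightarrow> bool) \<Rightarrow> real \<Rightarrow> 'a set \<Rightarrow> 'a set" where
  "K_set V E \<eta> Y = {v \<in> V. real (card (nbrs V E v \<inter> Y)) \<ge> (1 - \<eta>) * real (card Y)}"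

text \<open>Each undirected edge counted as two directed (ordered) pairs.\<close>
definition near_clique :: "('a \<Rightarrow> 'a \<Rightarrow> bool) \<Rightarrow> real \<Rightarrow> 'a set \<Rightarrow> bool" where
  "near_clique E \<gamma> D \<longleftrightarrow>
     real (card {(u, v). u \<in> D \<and> v \<in> D \<and> E u v})
       \<ge> (1 - \<gamma>) * real (card D) * (real (card D) - 1)"

definition in_one_component :: "('a \<Rightarrow> 'a \<Rightarrow> bool) \<Rightarrow> 'a set \<Rightarrow> 'a set \<Rightarrow> bool" where
  "in_one_component E S X \<longleftrightarrow> X \<subseteq> S \<and>
     (\<forall>x\<in>X. \<forall>y\<in>X. (\<lambda>u v. u \<in> S \<and> v \<in> S \<and> E u v)\<^sup>*\<^sup>* x y)"

end

theory Submission imports Defs begin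

lemma exp_aux:
  fixes t :: real assumes "t \<ge> 0" shows "t^2/8 \<le> exp (t/3)"
proof -
  define y where "y = t/6"
  have y0: "y \<ge> 0" using assms y_def by simp
  have "1 + y + y^2/2 \<le> exp y" using exp_lower_Taylor_quadratic[OF y0] .
  moreover have "213/100 * y \<le> 1 + y + y^2/2"
  proof -
    have "(y-113/100)^2 = y^2 - 226/100*y + 12769/10000" by (simp add: power2_eq_square algebra_simps)
    moreover have "0 \<le> (y-113/100)^2" by simp
    ultimately show ?thesis by linarith
  qed
  ultimately have h: "213/100 * y \<le> exp y" by linarith
  have "(213/100 * y)^2 \<le> (exp y)^2"
    using h y0 by (intro power_mono) auto
  also have "(exp y)^2 = exp (t/3)"
    by (simp add: y_def power2_eq_square exp_add[symmetric])
  finally have "(213/100*y)^2 \<le> exp (t/3)" .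
  moreover have "t^2/8 \<le> (213/100*y)^2" using y0 by (simp add: y_def power2_eq_square)
  ultimately show ?thesis by linarith
qed

lemma pair_prob:
  fixes V :: "'a set" and q :: real
  assumes fin: "finite V" and xV: "x \<in> V" and yV: "y \<in> V" and xy: "x \<noteq> y"
    and ZV: "Z \<subseteq> V" and xZ: "x \<notin> Z" and yZ: "y \<notin> Z" and q: "0 \<le> q" "q \<le> 1"
  shows "measure_pmf.prob (Pi_pmf V False (\<lambda>_. bernoulli_pmf q)) {f. f x \<and> f y \<and> (\<forall>z\<in>Z. \<not> f z)}
         = q^2 * (1-q)^card Z"
proof -
  define B where "B v = (if v = x \<or> v = y then {True} else if v \<in> Z then {False} else UNIV)" for v
  have eq: "{f. f x \<and> f y \<and> (\<forall>z\<in>Z. \<not> f z)} = Pi V B"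
    using xV yV ZV xZ yZ by (auto simp: B_def Pi_def)
  have pb: "measure_pmf.prob (bernoulli_pmf q) (B v) =
      (if v = x \<or> v = y then q else if v \<in> Z then 1 - q else 1)" for v
    using q by (auto simp: B_def measure_pmf_single pmf_bernoulli_True pmf_bernoulli_False)
  have "measure_pmf.prob (Pi_pmf V False (\<lambda>_. bernoulli_pmf q)) (Pi V B)
      = (\<Prod>v\<in>V. (if v = x \<or> v = y then q else if v \<in> Z then 1 - q else 1))"
    using fin by (simp add: measure_Pi_pmf_Pi pb)
  also have "\<dots> = prod (\<lambda>_. q) (V \<inter> {v. v = x \<or> v = y}) *
       prod (\<lambda>v. if v \<in> Z then 1 - q else 1) (V \<inter> - {v. v = x \<or> v = y})"
    using fin by (rule prod.If_cases)
  also have "V \<inter> {v. v = x \<or> v = y} = {x, y}" using xV yV by auto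
  also have "prod (\<lambda>v. if v \<in> Z then 1 - q else 1) (V \<inter> - {v. v = x \<or> v = y})
     = prod (\<lambda>_. 1 - q) ((V \<inter> - {v. v = x \<or> v = y}) \<inter> {v. v \<in> Z}) *
       prod (\<lambda>_. 1) ((V \<inter> - {v. v = x \<or> v = y}) \<inter> - {v. v \<in> Z})"
    using fin by (intro prod.If_cases) auto
  also have "(V \<inter> - {v. v = x \<or> v = y}) \<inter> {v. v \<in> Z} = Z" using ZV xZ yZ by auto
  finally show ?thesis using eq xy by (simp add: power2_eq_square)
qed

theorem lemma5p5:
  "\<exists>c::real. c > 0 \<and>
    (\<forall>(V :: nat set) E \<epsilon> \<delta> p D.
      simple_graph V E \<longrightarrow> 0 < \<epsilon> \<longrightarrow> \<epsilon> < 1/3 \<longrightarrow> \<delta> > 0 \<longrightarrow> 0 < p \<longrightarrow> p < 1 \<longrightarrow>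
      D \<subseteq> V \<longrightarrow> near_clique E (\<epsilon>^3) D \<longrightarrow> real (card D) \<ge> \<delta> * real (card V) \<longrightarrow>
      (let n = card V;
           C = K_set V E (\<epsilon>^2) D \<inter> D;
           p1 = p / 2;
           p2 = (p - p1) / (1 - p1);
           M = pair_pmf (Pi_pmf V False (\<lambda>_. bernoulli_pmf p1))
                        (Pi_pmf V False (\<lambda>_. bernoulli_pmf p2))
       in measure_pmf.prob M
            {(f, g). in_one_component E ({v \<in> V. f v} \<union> {v \<in> V. g v}) ({v \<in> V. f v} \<inter> C)}
          \<ge> 1 - exp (- c * \<delta> * p * real n)))"
proof (rule exI[of _ "1/18"], intro conjI allI impI)
  show "(0::real) < 1/18" by simp
  fix V :: "nat set" and E :: "nat \<Rightarrow> nat \<Rightarrow> bool" and \<epsilon> \<delta> p :: real and D :: "nat set"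
  assume G: "simple_graph V E" and e0: "0 < \<epsilon>" and e1: "\<epsilon> < 1/3" and d0: "\<delta> > 0"
    and p0: "0 < p" and p1: "p < 1" and DV: "D \<subseteq> V" and nc: "near_clique E (\<epsilon>^3) D"
    and cD: "real (card D) \<ge> \<delta> * real (card V)"
  define n where "n = card V"
  define m where "m = card D"
  define C where "C = K_set V E (\<epsilon>^2) D \<inter> D"
  define q where "q = p / 2"
  define M where "M = pair_pmf (Pi_pmf V False (\<lambda>_. bernoulli_pmf q))
                        (Pi_pmf V False (\<lambda>_. bernoulli_pmf ((p - q) / (1 - q))))"
  define Z where "Z x y = {z \<in> D. E x z \<and> E y z}" for x y
  define A where "A x y = {f. f x \<and> f y \<and> (\<forall>z\<in>Z x y. \<not> f z)}" for x y
  define P where "P = {(x,y). x \<in> C \<and> y \<in> C \<and> x < y}"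
  define U where "U = \<Union> ((\<lambda>(x,y). A x y) ` P)"
  define Good where "Good = {(f, g). in_one_component E ({v \<in> V. f v} \<union> {v \<in> V. g v}) ({v \<in> V. f v} \<inter> C)}"
  have finV: "finite V" and sym: "\<And>u v. E u v \<Longrightarrow> E v u" and irr: "\<And>v. \<not> E v v"
    using G by (auto simp: simple_graph_def)
  have CD: "C \<subseteq> D" by (auto simp: C_def)
  have finD: "finite D" using finV DV finite_subset by blast
  have finC: "finite C" using finD CD finite_subset by blast
  have q0: "0 \<le> q" "q \<le> 1" using p0 p1 by (auto simp: q_def)
  have sub: "UNIV - Good \<subseteq> fst -` U"
  proof
    fix fg assume fg: "fg \<in> UNIV - Good"
    obtain f g where fgd: "fg = (f, g)" by (cases fg)
    show "fg \<in> fst -` U"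
    proof (rule ccontr)
      assume nU: "fg \<notin> fst -` U"
      hence nA: "\<And>x y. (x,y) \<in> P \<Longrightarrow> f \<notin> A x y" using fgd by (auto simp: U_def)
      define S where "S = {v \<in> V. f v} \<union> {v \<in> V. g v}"
      define R where "R = (\<lambda>u v. u \<in> S \<and> v \<in> S \<and> E u v)"
      have path: "R\<^sup>*\<^sup>* x y" if "x \<in> {v \<in> V. f v} \<inter> C" "y \<in> {v \<in> V. f v} \<inter> C" "z \<in> Z x y" "f z" for x y z
      proof -
        have zV: "z \<in> V" using that(3) DV by (auto simp: Z_def)
        have "R x z" using that zV by (auto simp: R_def S_def Z_def)
        moreover have "R z y" using that zV sym by (auto simp: R_def S_def Z_def)
        ultimately show ?thesis by auto
      qed
      have "in_one_component E S ({v \<in> V. f v} \<inter> C)"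
        unfolding in_one_component_def R_def[symmetric]
      proof (intro conjI ballI)
        show "{v \<in> V. f v} \<inter> C \<subseteq> S" by (auto simp: S_def)
        fix x y assume x: "x \<in> {v \<in> V. f v} \<inter> C" and y: "y \<in> {v \<in> V. f v} \<inter> C"
        consider "x = y" | "x < y" | "y < x" by linarith
        then show "R\<^sup>*\<^sup>* x y"
        proof cases
          case 1 then show ?thesis by simp
        next
          case 2
          hence "(x,y) \<in> P" using x y by (auto simp: P_def)
          from nA[OF this] obtain z where "z \<in> Z x y" "f z" using x y by (auto simp: A_def)
          then show ?thesis using path x y by blast
        next
          case 3
          hence "(y,x) \<in> P" using x y by (auto simp: P_def)
          from nA[OF this] obtain z where "z \<in> Z y x" "f z" using x y by (auto simp: A_def)
          hence "z \<in> Z x y" by (auto simp: Z_def)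
          then show ?thesis using path x y \<open>f z\<close> by blast
        qed
      qed
      hence "fg \<in> Good" using fgd by (simp add: Good_def S_def)
      thus False using fg by simp
    qed
  qed
  have "measure_pmf.prob M (UNIV - Good) \<le> measure_pmf.prob M (fst -` U)"
    using sub by (intro measure_pmf.finite_measure_mono) auto
  also have "\<dots> = measure_pmf.prob (map_pmf fst M) U" by (simp add: measure_map_pmf)
  also have "\<dots> = measure_pmf.prob (Pi_pmf V False (\<lambda>_. bernoulli_pmf q)) U"
    by (simp add: M_def map_fst_pair_pmf)
  finally have s2: "1 - measure_pmf.prob M Good \<le> measure_pmf.prob (Pi_pmf V False (\<lambda>_. bernoulli_pmf q)) U"
    using measure_pmf.prob_compl[of Good M] by simp
  have finP: "finite P"
    by (rule finite_subset[of _ "C \<times> C"]) (auto simp: P_def finC)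
  have eps2: "\<epsilon>^2 \<le> 1/9"
  proof -
    have "\<epsilon>^2 \<le> (1/3)^2" using e0 e1 by (intro power_mono) auto
    thus ?thesis by (simp add: power2_eq_square)
  qed
  have cardZ: "real (card (Z x y)) \<ge> 7/9 * real m" if x: "x \<in> C" and y: "y \<in> C" for x y
  proof -
    define Nx where "Nx = nbrs V E x \<inter> D"
    define Ny where "Ny = nbrs V E y \<inter> D"
    have "real (card Nx) \<ge> (1 - \<epsilon>^2) * real m" using x by (auto simp: C_def K_set_def Nx_def m_def)
    moreover have "real (card Ny) \<ge> (1 - \<epsilon>^2) * real m" using y by (auto simp: C_def K_set_def Ny_def m_def)
    moreover have "card Nx + card Ny = card (Nx \<union> Ny) + card (Nx \<inter> Ny)"
      using finD by (intro card_Un_Int) (auto simp: Nx_def Ny_def)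
    moreover have "card (Nx \<union> Ny) \<le> m" unfolding m_def using finD
      by (intro card_mono) (auto simp: Nx_def Ny_def)
    moreover have "Nx \<inter> Ny = Z x y" using DV by (auto simp: Nx_def Ny_def Z_def nbrs_def)
    moreover have "\<epsilon>^2 * real m \<le> 1/9 * real m" using eps2 by (intro mult_right_mono) auto
    ultimately show ?thesis by (simp add: algebra_simps)
  qed
  have probA: "measure_pmf.prob (Pi_pmf V False (\<lambda>_. bernoulli_pmf q)) (A x y) \<le> q^2 * exp (- q * (7/9 * real m))"
    if "(x,y) \<in> P" for x y
  proof -
    have x: "x \<in> C" and y: "y \<in> C" and xy: "x \<noteq> y" using that by (auto simp: P_def)
    have eq: "measure_pmf.prob (Pi_pmf V False (\<lambda>_. bernoulli_pmf q)) (A x y) = q^2 * (1-q)^card (Z x y)"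
      unfolding A_def using x y xy CD DV irr q0
      by (intro pair_prob finV) (auto simp: Z_def)
    have "(1-q)^card (Z x y) \<le> exp (-q) ^ card (Z x y)"
      using q0 by (intro power_mono) (auto simp: exp_ge_add_one_self[of "-q", simplified] )
    also have "\<dots> = exp (- q * real (card (Z x y)))" by (simp add: exp_of_nat_mult[symmetric] mult.commute)
    also have "\<dots> \<le> exp (- q * (7/9 * real m))" using cardZ[OF x y] q0 using mult_left_mono[OF cardZ[OF x y], of q] by simp
    finally show ?thesis using eq q0 by (simp add: mult_left_mono)
  qed
  have "measure_pmf.prob (Pi_pmf V False (\<lambda>_. bernoulli_pmf q)) U
      \<le> (\<Sum>xy\<in>P. measure_pmf.prob (Pi_pmf V False (\<lambda>_. bernoulli_pmf q)) ((\<lambda>(x,y). A x y) xy))"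
    unfolding U_def using finP by (intro measure_pmf.finite_measure_subadditive_finite) auto
  also have "\<dots> \<le> (\<Sum>xy\<in>P. q^2 * exp (- q * (7/9 * real m)))"
    by (intro sum_mono) (use probA in auto)
  also have "\<dots> = real (card P) * (q^2 * exp (- q * (7/9 * real m)))" by simp
  finally have s3: "measure_pmf.prob (Pi_pmf V False (\<lambda>_. bernoulli_pmf q)) U \<le> real (card P) * (q^2 * exp (- q * (7/9 * real m)))" .
  have cP: "2 * card P \<le> m^2"
  proof -
    have disj: "P \<inter> prod.swap ` P = {}" by (auto simp: P_def)
    have "card (prod.swap ` P) = card P" by (intro card_image) (auto simp: inj_on_def)
    hence "2 * card P = card (P \<union> prod.swap ` P)"
      using disj finP by (simp add: card_Un_disjoint)
    also have "\<dots> \<le> card (C \<times> C)" using finC by (intro card_mono) (auto simp: P_def)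
    also have "\<dots> = card C ^ 2" by (simp add: card_cartesian_product power2_eq_square)
    also have "\<dots> \<le> m^2" unfolding m_def using CD finD by (intro power_mono card_mono) auto
    finally show ?thesis .
  qed
  define t where "t = p * real m"
  have t0: "t \<ge> 0" using p0 by (simp add: t_def)
  have "real (card P) * (q^2 * exp (- q * (7/9 * real m))) \<le> real m^2 / 2 * (q^2 * exp (- q * (7/9 * real m)))"
    using cP by (intro mult_right_mono) (auto simp flip: of_nat_power)
  also have "\<dots> = t^2/8 * exp (- 7 * t / 18)"
    by (simp add: t_def q_def power2_eq_square algebra_simps)
  also have "\<dots> \<le> exp (t/3) * exp (- 7 * t / 18)"
    using exp_aux[OF t0] by (intro mult_right_mono) auto
  also have "\<dots> = exp (- (1/18) * t)" by (simp add: exp_add[symmetric] algebra_simps)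
  also have "\<dots> \<le> exp (- (1/18) * \<delta> * p * real n)"
  proof -
    have "\<delta> * p * real n \<le> t" unfolding t_def n_def m_def
      using mult_right_mono[OF cD, of p] p0 by (simp add: algebra_simps)
    thus ?thesis by simp
  qed
  finally have "1 - measure_pmf.prob M Good \<le> exp (- (1/18) * \<delta> * p * real n)"
    using s2 s3 by linarith
  thus "let n = card V;
           C = K_set V E (\<epsilon>^2) D \<inter> D;
           p1 = p / 2;
           p2 = (p - p1) / (1 - p1);
           M = pair_pmf (Pi_pmf V False (\<lambda>_. bernoulli_pmf p1))
                        (Pi_pmf V False (\<lambda>_. bernoulli_pmf p2))
       in measure_pmf.prob M
            {(f, g). in_one_component E ({v \<in> V. f v} \<union> {v \<in> V. g v}) ({v \<in> V. f v} \<inter> C)}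
          \<ge> 1 - exp (- (1/18) * \<delta> * p * real n)"
    unfolding Let_def by (simp add: M_def q_def Good_def C_def n_def)
qed

end
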